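(* Let $d\ge2$ and $\epsilon>0$, and let $\alpha=(\alpha_1,\dots,\alpha_d)\in\mathbb{R}^d$ satisfy: (i) $(\alpha_1,\dots,\alpha_{d-1})\in\mathcal{B}_{d-1,1}$; (ii) $\alpha_d/\alpha_1\in\mathcal{E}(q\mapsto q^{-(2d-1+\epsilon)})\cap(0,1/2)$; (iii) the numbers $1,\alpha_1,\dots,\alpha_d$ are linearly independent over $\mathbb{Q}$. Let $L_1(n)=\sum_{j=1}^d\alpha_jn_j$ and $\Omega'=\{x\in(0,1]^d:x_d+2x_1\le1\}$, and for $r>0$ set \[\mathcal{A}(r)=\{L_1(n)\bmod 1:n\in r\Omega'\cap\mathbb{Z}^d\}\subseteq\mathbb{R}/\mathbb{Z}.\] Then there is a constant $C>0$ and an unbounded set of $r>0$ such that, for each such $r$, the number of distinct distances between consecutive elements of $\mathcal{A}(r)$ (arranged in cyclic order on the circle $\mathbb{R}/\mathbb{Z}$) is greater than $Cr^{\epsilon/(d+\epsilon)}$.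
   Context: For $x\in\mathbb{R}^m$, $|x|=\max_i|x_i|$, and $\|x\|$ is the distance from $x$ to the nearest integer (for real $x$). $\mathcal{B}_{d-1,1}$ is the set of $(a_1,\dots,a_{d-1})\in\mathbb{R}^{d-1}$ for which there is $C>0$ with $\|\sum_{j=1}^{d-1}a_jn_j\|\ge C/|n|^{d-1}$ for all $n\in\mathbb{Z}^{d-1}\setminus\{0\}$. For $\psi:\mathbb{N}\to[0,\infty)$, $\mathcal{E}(\psi)$ (in dimension one) is the set of $x\in[0,1)$ for which $\|nx\|\le\psi(|n|)$ holds for infinitely many integers $n$. *)

theory Defs
  imports Complex_Main
begin

definition dnint :: "real \<Rightarrow> real" where
  "dnint x = \<bar>x - of_int (round x)\<bar>"

definition supnorm :: "nat \<Rightarrow> (nat \<Rightarrow> int) \<Rightarrow> int" where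
  "supnorm m n = Max ((\<lambda>j. \<bar>n j\<bar>) ` {1..m})"

definition Bad_lin :: "nat \<Rightarrow> (nat \<Rightarrow> real) set" where
  "Bad_lin m = {a. \<exists>C>0. \<forall>n::nat \<Rightarrow> int. (\<exists>j\<in>{1..m}. n j \<noteq> 0) \<longrightarrow>
       dnint (\<Sum>j=1..m. a j * of_int (n j)) \<ge> C / (of_int (supnorm m n)) ^ m}"

definition Eset :: "(nat \<Rightarrow> real) \<Rightarrow> real set" where
  "Eset \<psi> = {x. 0 \<le> x \<and> x < 1 \<and> infinite {n::int. dnint (of_int n * x) \<le> \<psi> (nat \<bar>n\<bar>)}}"

text \<open>A(r) = {L_1(n) mod 1 : n in r Omega' intersected with Z^d}, represented in [0,1).\<close>
definition Aset :: "nat \<Rightarrow> (nat \<Rightarrow> real) \<Rightarrow> real \<Rightarrow> real set" where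
  "Aset d \<alpha> r = {frac (\<Sum>j=1..d. \<alpha> j * of_int (n j)) | n :: nat \<Rightarrow> int.
       (\<forall>j\<in>{1..d}. 0 < n j \<and> of_int (n j) \<le> r) \<and> of_int (n d + 2 * n 1) \<le> r}"

text \<open>Distances between cyclically consecutive elements of a finite set A in [0,1)
  on the circle R/Z (including the wrap-around gap).\<close>
definition cyc_gaps :: "real set \<Rightarrow> real set" where
  "cyc_gaps A = {b - a | a b. a \<in> A \<and> b \<in> A \<and> a < b \<and> \<not> (\<exists>c\<in>A. a < c \<and> c < b)}
     \<union> (if A = {} then {} else {1 + Min A - Max A})"

end

theory Submission
  imports Defs "HOL-Library.FuncSet"
begin

lemma dnint_le: "dnint x \<le> \<bar>x - of_int m\<bar>"
  unfolding dnint_def by (rule round_diff_minimal)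

lemma dnint_nonneg: "0 \<le> dnint x" unfolding dnint_def by simp

lemma dnint_half: "dnint x \<le> 1/2"
  unfolding dnint_def using of_int_round_abs_le[of x] by linarith

lemma dnint_add_int: "dnint (x + of_int k) = dnint x"
proof -
  have "dnint (x + of_int k) \<le> \<bar>x + of_int k - of_int (round x + k)\<bar>" by (rule dnint_le)
  also have "\<dots> = dnint x" unfolding dnint_def by simp
  finally have 1: "dnint (x + of_int k) \<le> dnint x" .
  have "dnint x \<le> \<bar>x - of_int (round (x + of_int k) - k)\<bar>" by (rule dnint_le)
  also have "\<dots> = dnint (x + of_int k)" unfolding dnint_def by (simp add: algebra_simps)
  finally show ?thesis using 1 by linarith
qed

lemma dnint_minus: "dnint (- x) = dnint x"
proof -
  have "dnint (- x) \<le> \<bar>- x - of_int (- round x)\<bar>" by (rule dnint_le)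
  also have "\<dots> = dnint x" unfolding dnint_def by simp
  finally have 1: "dnint (- x) \<le> dnint x" .
  have "dnint x \<le> \<bar>x - of_int (- round (-x))\<bar>" by (rule dnint_le)
  also have "\<dots> = dnint (- x)" unfolding dnint_def by simp
  finally show ?thesis using 1 by linarith
qed

lemma dnint_mult: "dnint (of_int k * x) \<le> \<bar>of_int k\<bar> * dnint x"
proof -
  have "dnint (of_int k * x) \<le> \<bar>of_int k * x - of_int (k * round x)\<bar>" by (rule dnint_le)
  also have "\<dots> = \<bar>of_int k\<bar> * dnint x" unfolding dnint_def
    by (simp add: abs_mult[symmetric] algebra_simps)
  finally show ?thesis .
qed

lemma dnint_add_le: "dnint (x + y) \<le> dnint x + \<bar>y\<bar>"
proof -
  have "dnint (x + y) \<le> \<bar>x + y - of_int (round x)\<bar>" by (rule dnint_le)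
  also have "\<dots> \<le> dnint x + \<bar>y\<bar>" unfolding dnint_def by linarith
  finally show ?thesis .
qed

lemma dnint_frac: "dnint x \<le> frac x" "dnint x \<le> 1 - frac x"
proof -
  have "dnint x \<le> \<bar>x - of_int (floor x)\<bar>" by (rule dnint_le)
  then show "dnint x \<le> frac x" unfolding frac_def by simp
  have "dnint x \<le> \<bar>x - of_int (floor x + 1)\<bar>" by (rule dnint_le)
  then show "dnint x \<le> 1 - frac x" unfolding frac_def using floor_correct[of x] by simp
qed

lemma frac_sub: "frac (frac a - frac b) = frac (a - b)"
proof -
  have "frac a - frac b = (a - b) + of_int (floor b - floor a)" unfolding frac_def by simp
  then show ?thesis by (metis frac_add_of_int_right of_int_diff)
qed

lemma frac_eq_Ints: "frac a = frac b \<Longrightarrow> a - b \<in> \<int>"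
  by (metis frac_diff_eq frac_eq_0_iff)

lemma frac_neg_small: "-1 \<le> x \<Longrightarrow> x < 0 \<Longrightarrow> frac x = x + 1"
  by (subst frac_unique_iff) auto

lemma gap_succ:
  assumes A: "finite A" "A \<subseteq> {0..<1}" and ab: "a \<in> A" "b \<in> A" "b \<noteq> a"
    and mn: "\<And>c. c \<in> A \<Longrightarrow> c \<noteq> a \<Longrightarrow> frac (b - a) \<le> frac (c - a)"
  shows "frac (b - a) \<in> cyc_gaps A"
proof (cases "a < b")
  case True
  have inA: "\<And>x. x \<in> A \<Longrightarrow> 0 \<le> x \<and> x < 1" using A(2) by auto
  have ba: "frac (b - a) = b - a" using inA[OF ab(1)] inA[OF ab(2)] True by (intro frac_eq_id) auto
  have "\<not> (\<exists>c\<in>A. a < c \<and> c < b)"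
  proof
    assume "\<exists>c\<in>A. a < c \<and> c < b"
    then obtain c where c: "c \<in> A" "a < c" "c < b" by blast
    have "frac (c - a) = c - a" using inA[OF c(1)] inA[OF ab(1)] inA[OF ab(2)] c by (intro frac_eq_id) auto
    with mn[OF c(1)] c ba show False by auto
  qed
  then show ?thesis unfolding cyc_gaps_def using ab True ba by blast
next
  case False
  then have lt: "b < a" using ab by auto
  have inA: "\<And>x. x \<in> A \<Longrightarrow> 0 \<le> x \<and> x < 1" using A(2) by auto
  have ba: "frac (b - a) = b - a + 1" using inA[OF ab(1)] inA[OF ab(2)] lt by (intro frac_neg_small) auto
  have mx: "Max A = a"
  proof (rule Max_eqI[OF A(1) _ ab(1)])
    fix c assume c: "c \<in> A"
    show "c \<le> a"
    proof (rule ccontr)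
      assume "\<not> c \<le> a"
      then have "frac (c - a) = c - a" using inA[OF c] inA[OF ab(1)] inA[OF ab(2)] by (intro frac_eq_id) auto
      with mn[OF c] \<open>\<not> c \<le> a\<close> ba inA[OF c] inA[OF ab(2)] show False by auto
    qed
  qed
  have mi: "Min A = b"
  proof (rule Min_eqI[OF A(1) _ ab(2)])
    fix c assume c: "c \<in> A"
    show "b \<le> c"
    proof (rule ccontr)
      assume "\<not> b \<le> c"
      then have "frac (c - a) = c - a + 1" using inA[OF c] inA[OF ab(1)] inA[OF ab(2)] lt by (intro frac_neg_small) auto
      with mn[OF c] \<open>\<not> b \<le> c\<close> ba lt show False by auto
    qed
  qed
  show ?thesis unfolding cyc_gaps_def using ab mx mi ba by auto
qed

lemma gap_pred:
  assumes A: "finite A" "A \<subseteq> {0..<1}" and ab: "a \<in> A" "b \<in> A" "b \<noteq> a"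
    and mn: "\<And>c. c \<in> A \<Longrightarrow> c \<noteq> b \<Longrightarrow> frac (b - a) \<le> frac (b - c)"
  shows "frac (b - a) \<in> cyc_gaps A"
proof (cases "a < b")
  case True
  have inA: "\<And>x. x \<in> A \<Longrightarrow> 0 \<le> x \<and> x < 1" using A(2) by auto
  have ba: "frac (b - a) = b - a" using inA[OF ab(1)] inA[OF ab(2)] True by (intro frac_eq_id) auto
  have "\<not> (\<exists>c\<in>A. a < c \<and> c < b)"
  proof
    assume "\<exists>c\<in>A. a < c \<and> c < b"
    then obtain c where c: "c \<in> A" "a < c" "c < b" by blast
    have "frac (b - c) = b - c" using inA[OF c(1)] inA[OF ab(1)] inA[OF ab(2)] c by (intro frac_eq_id) auto
    with mn[OF c(1)] c ba show False by auto
  qed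
  then show ?thesis unfolding cyc_gaps_def using ab True ba by blast
next
  case False
  then have lt: "b < a" using ab by auto
  have inA: "\<And>x. x \<in> A \<Longrightarrow> 0 \<le> x \<and> x < 1" using A(2) by auto
  have ba: "frac (b - a) = b - a + 1" using inA[OF ab(1)] inA[OF ab(2)] lt by (intro frac_neg_small) auto
  have mx: "Max A = a"
  proof (rule Max_eqI[OF A(1) _ ab(1)])
    fix c assume c: "c \<in> A"
    show "c \<le> a"
    proof (rule ccontr)
      assume "\<not> c \<le> a"
      then have "frac (b - c) = b - c + 1" using inA[OF c] inA[OF ab(1)] inA[OF ab(2)] lt by (intro frac_neg_small) auto
      with mn[OF c] \<open>\<not> c \<le> a\<close> ba lt show False by auto
    qed
  qed
  have mi: "Min A = b"
  proof (rule Min_eqI[OF A(1) _ ab(2)])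
    fix c assume c: "c \<in> A"
    show "b \<le> c"
    proof (rule ccontr)
      assume "\<not> b \<le> c"
      then have "frac (b - c) = b - c" using inA[OF c] inA[OF ab(1)] inA[OF ab(2)] by (intro frac_eq_id) auto
      with mn[OF c] \<open>\<not> b \<le> c\<close> ba inA[OF c] inA[OF ab(1)] show False by auto
    qed
  qed
  show ?thesis unfolding cyc_gaps_def using ab mx mi ba by auto
qed

lemma finite_cyc_gaps: "finite A \<Longrightarrow> finite (cyc_gaps A)"
proof -
  assume f: "finite A"
  have "{b - a | a b. a \<in> A \<and> b \<in> A \<and> a < b \<and> \<not> (\<exists>c\<in>A. a < c \<and> c < b)}
      \<subseteq> (\<lambda>(a,b). b - a) ` (A \<times> A)" by auto
  moreover have "finite ((\<lambda>(a,b). b - a) ` (A \<times> A))" using f by auto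
  ultimately have "finite {b - a | a b. a \<in> A \<and> b \<in> A \<and> a < b \<and> \<not> (\<exists>c\<in>A. a < c \<and> c < b)}"
    by (rule finite_subset)
  then show ?thesis unfolding cyc_gaps_def by simp
qed

definition Lf :: "nat \<Rightarrow> (nat \<Rightarrow> real) \<Rightarrow> (nat \<Rightarrow> int) \<Rightarrow> real" where
  "Lf d \<alpha> u = (\<Sum>j=1..d. \<alpha> j * of_int (u j))"

definition Rg :: "nat \<Rightarrow> real \<Rightarrow> (nat \<Rightarrow> int) \<Rightarrow> bool" where
  "Rg d r n \<longleftrightarrow> (\<forall>j\<in>{1..d}. 0 < n j \<and> of_int (n j) \<le> r) \<and> of_int (n d + 2 * n 1) \<le> r"

definition wv :: "nat \<Rightarrow> int \<Rightarrow> int \<Rightarrow> nat \<Rightarrow> int" where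
  "wv d p q = (\<lambda>j. if j = 1 then - p else if j = d then q else 0)"

lemma Aset_eq: "Aset d \<alpha> r = (\<lambda>n. frac (Lf d \<alpha> n)) ` {n. Rg d r n}"
  unfolding Aset_def Lf_def Rg_def by auto

lemma Lf_diff: "Lf d \<alpha> (\<lambda>j. u j - v j) = Lf d \<alpha> u - Lf d \<alpha> v"
  by (simp add: Lf_def sum_subtractf algebra_simps)

lemma Lf_add: "Lf d \<alpha> (\<lambda>j. u j + v j) = Lf d \<alpha> u + Lf d \<alpha> v"
  by (simp add: Lf_def sum.distrib algebra_simps)

lemma Lf_cong: "(\<And>j. j \<in> {1..d} \<Longrightarrow> u j = v j) \<Longrightarrow> Lf d \<alpha> u = Lf d \<alpha> v"
  unfolding Lf_def by (rule sum.cong) auto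

lemma Rg_cong: "(\<And>j. j \<in> {1..d} \<Longrightarrow> u j = v j) \<Longrightarrow> d \<ge> 1 \<Longrightarrow> Rg d r u = Rg d r v"
  unfolding Rg_def by auto

lemma Lf_wv: assumes "d \<ge> 2" shows "Lf d \<alpha> (wv d p q) = of_int q * \<alpha> d - of_int p * \<alpha> 1"
proof -
  have "Lf d \<alpha> (wv d p q) = (\<Sum>j=1..d. (if j = 1 then - (of_int p * \<alpha> 1) else 0)
           + (if j = d then of_int q * \<alpha> d else 0))"
    unfolding Lf_def wv_def by (rule sum.cong) (use assms in auto)
  also have "\<dots> = of_int q * \<alpha> d - of_int p * \<alpha> 1"
    using assms by (simp add: sum.distrib)
  finally show ?thesis .
qed

lemma indep_int:
  assumes indep: "\<And>(c0::rat) (c::nat \<Rightarrow> rat).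
           of_rat c0 + (\<Sum>j=1..d. of_rat (c j) * \<alpha> j) = 0 \<Longrightarrow> c0 = 0 \<and> (\<forall>j\<in>{1..d}. c j = 0)"
    and "Lf d \<alpha> u \<in> \<int>"
  shows "\<forall>j\<in>{1..d}. u j = 0"
proof -
  obtain k where k: "Lf d \<alpha> u = of_int k" using assms(2) by (auto elim: Ints_cases)
  have "of_rat (- of_int k) + (\<Sum>j=1..d. of_rat (of_int (u j)) * \<alpha> j) = 0"
    using k unfolding Lf_def by (simp add: mult.commute of_rat_minus)
  from indep[OF this] show ?thesis by simp
qed

lemma finite_Aset: "finite (Aset d \<alpha> r)"
proof -
  let ?P = "PiE {1..d} (\<lambda>_. {0..\<lfloor>r\<rfloor>})"
  have "Aset d \<alpha> r \<subseteq> (\<lambda>n. frac (Lf d \<alpha> n)) ` ?P"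
  proof
    fix x assume "x \<in> Aset d \<alpha> r"
    then obtain n where n: "Rg d r n" "x = frac (Lf d \<alpha> n)" unfolding Aset_eq by auto
    have "restrict n {1..d} \<in> ?P" using n(1) unfolding Rg_def
      by (auto simp: PiE_def le_floor_iff)
    moreover have "Lf d \<alpha> (restrict n {1..d}) = Lf d \<alpha> n" by (rule Lf_cong) auto
    ultimately show "x \<in> (\<lambda>n. frac (Lf d \<alpha> n)) ` ?P" using n(2) by (metis image_eqI)
  qed
  moreover have "finite ?P" by (intro finite_PiE) auto
  ultimately show ?thesis by (meson finite_imageI finite_subset)
qed

lemma Aset_sub: "Aset d \<alpha> r \<subseteq> {0..<1}"
  unfolding Aset_eq using frac_lt_1 by auto

lemma sum_split_last:
  fixes d :: nat
  assumes "d \<ge> 2"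
  shows "(\<Sum>j=1..d. f j) = (\<Sum>j=1..d-1. f j) + (f d :: real)"
proof -
  obtain m where m: "d = Suc m" "m \<ge> 1" using assms by (cases d) auto
  show ?thesis using m by simp
qed

lemma separation:
  fixes d :: nat and \<alpha> :: "nat \<Rightarrow> real" and p q :: int and r \<eta> CB :: real and u :: "nat \<Rightarrow> int"
  assumes d2: "d \<ge> 2"
    and bad: "\<forall>n::nat\<Rightarrow>int. (\<exists>j\<in>{1..d-1}. n j \<noteq> 0) \<longrightarrow>
       dnint (\<Sum>j=1..d-1. \<alpha> j * of_int (n j)) \<ge> CB / (of_int (supnorm (d-1) n)) ^ (d-1)"
    and CB: "CB > 0" and pq: "1 \<le> p" "p \<le> q" "coprime p q"
    and eta: "\<eta> = of_int q * \<alpha> d - of_int p * \<alpha> 1"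
    and K: "(of_int q + r) * \<bar>\<eta>\<bar> * (2 * of_int q * r) ^ (d-1) < CB"
    and u: "\<forall>i\<in>{1..d}. \<bar>of_int (u i)\<bar> < r"
  shows "(\<exists>j::int. \<forall>i\<in>{1..d}. u i = j * wv d p q i) \<or> dnint (Lf d \<alpha> u) > \<bar>\<eta>\<bar>"
proof -
  define v where "v = (\<lambda>j. if j = 1 then q * u 1 + p * u d else q * u j)"
  have r0: "r > 0" using u d2 by (metis abs_ge_zero atLeastAtMost_iff le_less_trans one_le_numeral order_trans order_less_le_trans)
  show ?thesis
  proof (cases "\<exists>j\<in>{1..d-1}. v j \<noteq> 0")
    case False
    then have v0: "\<And>j. j \<in> {1..d-1} \<Longrightarrow> v j = 0" by auto
    have "v 1 = 0" using v0 d2 by auto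
    then have e1: "q * u 1 + p * u d = 0" unfolding v_def by simp
    have mid: "u j = 0" if "j \<in> {2..d-1}" for j
    proof -
      have "v j = 0" using v0 that by auto
      then show ?thesis unfolding v_def using that pq by auto
    qed
    have "q dvd p * u d" using e1 by (metis add.commute add_eq_0_iff dvd_minus_iff dvd_triv_left)
    then have "q dvd u d" using pq(3) by (simp add: coprime_commute coprime_dvd_mult_right_iff)
    then obtain j where j: "u d = q * j" by (auto elim: dvdE)
    have "q * u 1 = q * (- p * j)" using e1 j by (simp add: algebra_simps)
    moreover have qnz: "q \<noteq> 0" using pq by auto
    ultimately have j1: "u 1 = - p * j" by (metis mult_cancel_left)
    have "\<forall>i\<in>{1..d}. u i = j * wv d p q i"
    proof
      fix i assume i: "i \<in> {1..d}"
      show "u i = j * wv d p q i"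
      proof (cases "i = 1")
        case True then show ?thesis using j1 by (simp add: wv_def)
      next
        case False
        show ?thesis
        proof (cases "i = d")
          case True then show ?thesis using j False by (simp add: wv_def)
        next
          case False2: False
          then have "i \<in> {2..d-1}" using i False by auto
          then show ?thesis using mid False False2 by (simp add: wv_def)
        qed
      qed
    qed
    then show ?thesis by blast
  next
    case True
    then obtain j0 where j0: "j0 \<in> {1..d-1}" "v j0 \<noteq> 0" by auto
    define S where "S = (\<Sum>j=1..d-1. \<alpha> j * of_int (v j))"
    have bS: "dnint S \<ge> CB / (of_int (supnorm (d-1) v)) ^ (d-1)"
      using bad True unfolding S_def by blast
    have "S = (\<Sum>j=1..d-1. of_int q * (\<alpha> j * of_int (u j)) + (if j = 1 then \<alpha> 1 * of_int p * of_int (u d) else 0))"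
      unfolding S_def v_def by (rule sum.cong) (auto simp: algebra_simps)
    also have "\<dots> = of_int q * (\<Sum>j=1..d-1. \<alpha> j * of_int (u j)) + \<alpha> 1 * of_int p * of_int (u d)"
      using d2 by (auto simp add: sum.distrib sum_distrib_left)
    also have "\<dots> = of_int q * Lf d \<alpha> u - of_int (u d) * \<eta>"
      unfolding Lf_def sum_split_last[OF d2] eta by (simp add: algebra_simps)
    finally have Seq: "S = of_int q * Lf d \<alpha> u + (- (of_int (u d) * \<eta>))" by simp
    have "dnint S \<le> dnint (of_int q * Lf d \<alpha> u) + \<bar>of_int (u d) * \<eta>\<bar>"
      using dnint_add_le[of "of_int q * Lf d \<alpha> u" "- (of_int (u d) * \<eta>)"] Seq by simp
    also have "\<dots> \<le> of_int q * dnint (Lf d \<alpha> u) + r * \<bar>\<eta>\<bar>"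
    proof -
      have "dnint (of_int q * Lf d \<alpha> u) \<le> of_int q * dnint (Lf d \<alpha> u)"
        using dnint_mult[of q "Lf d \<alpha> u"] pq by simp
      moreover have "\<bar>of_int (u d) * \<eta>\<bar> \<le> r * \<bar>\<eta>\<bar>"
      proof -
        have "\<bar>of_int (u d)\<bar> \<le> r" using u d2 by (auto intro: less_imp_le)
        then show ?thesis by (simp add: abs_mult mult_right_mono)
      qed
      ultimately show ?thesis by linarith
    qed
    finally have up: "dnint S \<le> of_int q * dnint (Lf d \<alpha> u) + r * \<bar>\<eta>\<bar>" .
    have vb: "\<bar>of_int (v j)\<bar> \<le> 2 * of_int q * r" if "j \<in> {1..d-1}" for j
    proof -
      have uj: "\<bar>of_int (u j)\<bar> \<le> r" "\<bar>of_int (u 1)\<bar> \<le> r" "\<bar>of_int (u d)\<bar> \<le> r"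
        using u that d2 by (auto intro: less_imp_le)
      have q0: "(0::real) \<le> of_int q" "of_int p \<le> (of_int q :: real)" "(0::real) \<le> of_int p"
        using pq by auto
      show ?thesis
      proof (cases "j = 1")
        case True
        have "\<bar>of_int (v j)\<bar> \<le> of_int q * \<bar>of_int (u 1)\<bar> + of_int p * \<bar>(of_int (u d)::real)\<bar>"
        proof -
          have "\<bar>of_int (v j)\<bar> = \<bar>of_int q * of_int (u 1) + of_int p * (of_int (u d)::real)\<bar>"
            using True unfolding v_def by simp
          also have "\<dots> \<le> \<bar>of_int q * of_int (u 1)\<bar> + \<bar>of_int p * (of_int (u d)::real)\<bar>"
            by (rule abs_triangle_ineq)
          also have "\<dots> = of_int q * \<bar>of_int (u 1)\<bar> + of_int p * \<bar>of_int (u d)\<bar>"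
            using q0 by (simp add: abs_mult)
          finally show ?thesis .
        qed
        also have "\<dots> \<le> of_int q * r + of_int q * r"
          using uj q0 by (intro add_mono mult_mono) auto
        finally show ?thesis by (simp add: algebra_simps)
      next
        case False
        have "\<bar>(of_int (v j)::real)\<bar> = of_int q * \<bar>of_int (u j)\<bar>" using False q0 unfolding v_def by (simp add: abs_mult)
        also have "\<dots> \<le> of_int q * r" using uj q0 by (intro mult_left_mono) auto
        also have "\<dots> \<le> 2 * of_int q * r" using q0 r0 by simp
        finally show ?thesis .
      qed
    qed
    have fin: "finite ((\<lambda>j. \<bar>v j\<bar>) ` {1..d-1})" by simp
    have ne: "(\<lambda>j. \<bar>v j\<bar>) ` {1..d-1} \<noteq> {}" using j0 by auto
    have snge: "\<bar>v j0\<bar> \<le> supnorm (d-1) v" unfolding supnorm_def using fin j0 by (intro Max_ge) auto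
    have snpos: "(0::real) < of_int (supnorm (d-1) v)" using snge j0 by linarith
    have snle: "of_int (supnorm (d-1) v) \<le> 2 * of_int q * r"
    proof -
      obtain j where j: "j \<in> {1..d-1}" "supnorm (d-1) v = \<bar>v j\<bar>"
        unfolding supnorm_def using Max_in[OF fin ne] by auto
      show ?thesis using vb[OF j(1)] j(2) by simp
    qed
    have "CB / (2 * of_int q * r) ^ (d-1) \<le> CB / (of_int (supnorm (d-1) v)) ^ (d-1)"
      using CB snpos snle pq r0 by (intro divide_left_mono power_mono mult_pos_pos zero_less_power) auto
    also have "\<dots> \<le> of_int q * dnint (Lf d \<alpha> u) + r * \<bar>\<eta>\<bar>" using bS up by linarith
    finally have A1: "CB / (2 * of_int q * r) ^ (d-1) \<le> of_int q * dnint (Lf d \<alpha> u) + r * \<bar>\<eta>\<bar>" .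
    have pos: "(0::real) < (2 * of_int q * r) ^ (d-1)" using pq r0 by simp
    have "(of_int q + r) * \<bar>\<eta>\<bar> < CB / (2 * of_int q * r) ^ (d-1)"
      using K pos by (simp add: pos_less_divide_eq)
    with A1 have "of_int q * \<bar>\<eta>\<bar> < of_int q * dnint (Lf d \<alpha> u)" by (simp add: algebra_simps)
    then show ?thesis using pq by simp
  qed
qed

lemma Lf_smul: "Lf d \<alpha> (\<lambda>i. j * w i) = of_int j * Lf d \<alpha> w"
  by (simp add: Lf_def sum_distrib_left algebra_simps)

lemma Rg_nt:
  assumes "d \<ge> 2" "1 \<le> t" "of_int t + 2 \<le> r"
  shows "Rg d r (\<lambda>j. if j = d then t else 1)"
  using assms unfolding Rg_def by auto

lemma not_Rg_nt_w:
  assumes "d \<ge> 2" "1 \<le> p"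
  shows "\<not> Rg d r (\<lambda>j. (if j = d then t else 1) + wv d p q j)"
proof
  assume "Rg d r (\<lambda>j. (if j = d then t else 1) + wv d p q j)"
  moreover have h: "(1::nat) \<in> {1..d}" using assms by simp
  ultimately have "0 < (if (1::nat) = d then t else 1) + wv d p q 1" unfolding Rg_def by blast
  then show False using assms unfolding wv_def by auto
qed

lemma Rg_shift:
  assumes "d \<ge> 2" "2 * p \<le> q" "0 \<le> p" "Rg d r m" "q < m d"
  shows "Rg d r (\<lambda>j. m j - wv d p q j)"
proof -
  have m1: "0 < m 1" "of_int (m 1) \<le> r" using assms unfolding Rg_def by auto
  have md: "0 < m d" "of_int (m d) \<le> r" using assms unfolding Rg_def by auto
  have c: "of_int (m d + 2 * m 1) \<le> r" using assms unfolding Rg_def by auto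
  have "real_of_int (m d - q) + 2 * real_of_int (m 1 + p) \<le> r"
    using c assms(2) by simp
  then show ?thesis using assms m1 md unfolding Rg_def wv_def by auto
qed

lemma Rg_diff_bound:
  assumes "Rg d r m" "Rg d r n"
  shows "\<forall>i\<in>{1..d}. \<bar>of_int (m i - n i)\<bar> < r"
proof
  fix i assume i: "i \<in> {1..d}"
  have "0 < m i" "of_int (m i) \<le> r" "0 < n i" "of_int (n i) \<le> r" using assms i unfolding Rg_def by auto
  then show "\<bar>of_int (m i - n i)\<bar> < r" by linarith
qed

lemma frac_jeta:
  fixes j :: int and \<eta> r :: real
  assumes "\<bar>of_int j\<bar> < r" "(r + 1) * \<bar>\<eta>\<bar> < 1" "j \<noteq> 0" "\<eta> \<noteq> 0"
    "\<not> (of_int j * \<eta> > 0 \<and> \<bar>j\<bar> = 1)"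
  shows "frac (of_int j * \<eta>) > \<bar>\<eta>\<bar>"
proof -
  have "\<bar>of_int j * \<eta>\<bar> = \<bar>of_int j\<bar> * \<bar>\<eta>\<bar>" by (simp add: abs_mult)
  have jr: "\<bar>of_int j\<bar> * \<bar>\<eta>\<bar> \<le> r * \<bar>\<eta>\<bar>" using assms(1) by (intro mult_right_mono) auto
  have j1: "(1::real) \<le> \<bar>of_int j\<bar>" using assms(3) by linarith
  have e0: "0 < \<bar>\<eta>\<bar>" using assms(4) by simp
  show ?thesis
  proof (cases "of_int j * \<eta> > 0")
    case True
    then have "\<bar>j\<bar> \<ge> 2" using assms(3,5) by auto
    then have j2: "(2::real) \<le> \<bar>of_int j\<bar>" by linarith
    have eq: "of_int j * \<eta> = \<bar>of_int j\<bar> * \<bar>\<eta>\<bar>" using True by (simp add: abs_mult[symmetric])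
    have "of_int j * \<eta> < 1" using eq jr assms(2) by (simp add: algebra_simps)
    then have "frac (of_int j * \<eta>) = of_int j * \<eta>" using True by (intro frac_eq_id) auto
    moreover have "\<bar>\<eta>\<bar> < \<bar>of_int j\<bar> * \<bar>\<eta>\<bar>" using j2 e0 by simp
    ultimately show ?thesis using eq by simp
  next
    case False
    have lt1: "\<bar>of_int j\<bar> * \<bar>\<eta>\<bar> < 1" using jr assms(2) e0 unfolding distrib_right by linarith
    from False have neg: "of_int j * \<eta> < 0" using assms(3,4) by (simp add: linorder_not_less order_le_less)
    have eq: "of_int j * \<eta> = - (\<bar>of_int j\<bar> * \<bar>\<eta>\<bar>)" using neg by (simp add: abs_mult[symmetric])
    have "frac (of_int j * \<eta>) = of_int j * \<eta> + 1"
      using eq lt1 neg by (intro frac_neg_small) (auto simp: algebra_simps)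
    moreover have "\<bar>of_int j\<bar> * \<bar>\<eta>\<bar> + \<bar>\<eta>\<bar> < 1" using jr assms(2) by (simp add: algebra_simps)
    ultimately show ?thesis using eq by simp
  qed
qed

lemma frac_shift: "frac (x - e) = frac (frac x - e)"
proof -
  have "frac x - e = (x - e) + of_int (- floor x)" unfolding frac_def by simp
  then show ?thesis by (metis frac_add_of_int_right)
qed

lemma exists_min_on:
  fixes f :: "real \<Rightarrow> real"
  assumes "finite B" "B \<noteq> {}"
  obtains b where "b \<in> B" "\<And>c. c \<in> B \<Longrightarrow> f b \<le> f c"
proof -
  have "Min (f ` B) \<in> f ` B" using assms by (intro Min_in) auto
  then obtain b where b: "b \<in> B" "f b = Min (f ` B)" by auto
  have "\<And>c. c \<in> B \<Longrightarrow> f b \<le> f c" using b assms by (simp add: Min_le)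
  with b that show ?thesis by blast
qed

lemma claim:
  fixes d :: nat and \<alpha> :: "nat \<Rightarrow> real" and p q t :: int and r \<eta> :: real
  assumes d2: "d \<ge> 2"
    and indep: "\<And>(c0::rat) (c::nat \<Rightarrow> rat).
           of_rat c0 + (\<Sum>j=1..d. of_rat (c j) * \<alpha> j) = 0 \<Longrightarrow> c0 = 0 \<and> (\<forall>j\<in>{1..d}. c j = 0)"
    and pq: "1 \<le> p" "2 * p \<le> q"
    and eta: "\<eta> = Lf d \<alpha> (wv d p q)" and ne: "\<eta> \<noteq> 0"
    and sep: "\<forall>u. (\<forall>i\<in>{1..d}. \<bar>of_int (u i)\<bar> < r) \<longrightarrow>
                 (\<exists>j::int. \<forall>i\<in>{1..d}. u i = j * wv d p q i) \<or> dnint (Lf d \<alpha> u) > \<bar>\<eta>\<bar>"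
    and small: "(r + 1) * \<bar>\<eta>\<bar> < 1"
    and t: "1 \<le> t" "of_int t + 2 \<le> r"
    and other: "Rg d r n'" "n' d \<noteq> t"
  shows "\<exists>m. Rg d r m \<and> m d \<le> q \<and>
     frac ((if \<eta> > 0 then 1 else -1) * (Lf d \<alpha> m - Lf d \<alpha> (\<lambda>j. if j = d then t else 1)))
       \<in> cyc_gaps (Aset d \<alpha> r)"
proof -
  define n where "n = (\<lambda>j::nat. if j = d then t else 1)"
  define w where "w = wv d p q"
  define A where "A = Aset d \<alpha> r"
  define a where "a = frac (Lf d \<alpha> n)"
  define \<sigma> :: int where "\<sigma> = (if \<eta> > 0 then 1 else -1)"
  have d1: "d \<ge> 1" using d2 by simp
  have dd: "d \<in> {1..d}" using d1 by simp
  have Rn: "Rg d r n" unfolding n_def using Rg_nt[OF d2 t] .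
  have nRnw: "\<not> Rg d r (\<lambda>j. n j + w j)" unfolding n_def w_def using not_Rg_nt_w[OF d2 pq(1)] .
  have finA: "finite A" unfolding A_def by (rule finite_Aset)
  have subA: "A \<subseteq> {0..<1}" unfolding A_def by (rule Aset_sub)
  have aA: "a \<in> A" unfolding A_def a_def Aset_eq using Rn by auto
  have inA: "frac (Lf d \<alpha> m) \<in> A" if "Rg d r m" for m unfolding A_def Aset_eq using that by auto
  have F: "frac (Lf d \<alpha> m) = a \<Longrightarrow> \<forall>i\<in>{1..d}. m i = n i" for m
  proof -
    assume "frac (Lf d \<alpha> m) = a"
    then have "Lf d \<alpha> m - Lf d \<alpha> n \<in> \<int>" unfolding a_def by (rule frac_eq_Ints)
    then have "Lf d \<alpha> (\<lambda>j. m j - n j) \<in> \<int>" by (simp add: Lf_diff)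
    from indep_int[OF indep this] show ?thesis by simp
  qed
  have Rw: "\<not> (\<forall>i\<in>{1..d}. m i = n i + w i)" if "Rg d r m" for m
  proof
    assume "\<forall>i\<in>{1..d}. m i = n i + w i"
    then have "Rg d r m = Rg d r (\<lambda>j. n j + w j)" using d1 by (intro Rg_cong) auto
    with that nRnw show False by simp
  qed
  have gapbig: "frac (Lf d \<alpha> u) > \<bar>\<eta>\<bar>"
    if ub: "\<forall>i\<in>{1..d}. \<bar>of_int (u i)\<bar> < r" and u0: "\<not> (\<forall>i\<in>{1..d}. u i = 0)"
       and uw: "\<not> (\<forall>i\<in>{1..d}. u i = \<sigma> * w i)" for u
  proof -
    from sep ub consider (a) j where "\<forall>i\<in>{1..d}. u i = j * w i" | (b) "dnint (Lf d \<alpha> u) > \<bar>\<eta>\<bar>"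
      unfolding w_def by blast
    then show ?thesis
    proof cases
      case b then show ?thesis using dnint_frac(1)[of "Lf d \<alpha> u"] by linarith
    next
      case (a j)
      have L: "Lf d \<alpha> u = of_int j * \<eta>"
      proof -
        have "Lf d \<alpha> u = Lf d \<alpha> (\<lambda>i. j * w i)" using a by (intro Lf_cong) auto
        then show ?thesis by (simp add: Lf_smul eta w_def)
      qed
      have j0: "j \<noteq> 0" using a u0 by auto
      have wd: "w d = q" unfolding w_def wv_def using d2 by simp
      have q1: "(1::real) \<le> of_int q" using pq by simp
      have "\<bar>(of_int (u d)::real)\<bar> = \<bar>of_int j\<bar> * of_int q"
        using a dd wd pq by (simp add: abs_mult)
      moreover have "\<bar>of_int j\<bar> * 1 \<le> \<bar>(of_int j::real)\<bar> * of_int q"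
        using q1 by (intro mult_left_mono) auto
      ultimately have "\<bar>of_int j\<bar> \<le> \<bar>(of_int (u d)::real)\<bar>" by simp
      also have "\<dots> < r" using ub dd by blast
      finally have jr: "\<bar>of_int j\<bar> < r" .
      have nn: "\<not> (of_int j * \<eta> > 0 \<and> \<bar>j\<bar> = 1)"
      proof
        assume h: "of_int j * \<eta> > 0 \<and> \<bar>j\<bar> = 1"
        then have "j = \<sigma>" unfolding \<sigma>_def using ne
          by (auto simp: abs_if zero_less_mult_iff split: if_splits)
        then show False using a uw by auto
      qed
      show ?thesis using frac_jeta[OF jr small j0 ne nn] L by simp
    qed
  qed
  obtain n'' where n'': "Rg d r n''" "frac (Lf d \<alpha> n'') \<noteq> a"
  proof -
    have "frac (Lf d \<alpha> n') \<noteq> a"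
    proof
      assume "frac (Lf d \<alpha> n') = a"
      from F[OF this] dd have "n' d = n d" by blast
      with other(2) show False unfolding n_def by simp
    qed
    with other(1) that show ?thesis by blast
  qed
  define B where "B = A - {a}"
  have finB: "finite B" unfolding B_def using finA by simp
  have neB: "B \<noteq> {}" unfolding B_def using n'' inA by blast
  show ?thesis
  proof (cases "\<eta> > 0")
    case True
    have sig: "\<sigma> = 1" unfolding \<sigma>_def using True by simp
    obtain b where b: "b \<in> B" "\<And>c. c \<in> B \<Longrightarrow> frac (b - a) \<le> frac (c - a)"
      using exists_min_on[OF finB neB, of "\<lambda>c. frac (c - a)"] by blast
    have bA: "b \<in> A" "b \<noteq> a" using b(1) unfolding B_def by auto
    then obtain m where m: "Rg d r m" "b = frac (Lf d \<alpha> m)" unfolding A_def Aset_eq by auto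
    have gap: "frac (b - a) \<in> cyc_gaps A"
      using gap_succ[OF finA subA aA bA(1) bA(2)] b(2) unfolding B_def by blast
    have gapeq: "frac (b - a) = frac (Lf d \<alpha> m - Lf d \<alpha> n)" unfolding m(2) a_def by (rule frac_sub)
    have "m d \<le> q"
    proof (rule ccontr)
      assume "\<not> m d \<le> q"
      then have "q < m d" by simp
      define m' where "m' = (\<lambda>j. m j - w j)"
      have Rm': "Rg d r m'" unfolding m'_def w_def using Rg_shift[OF d2 pq(2) _ m(1) \<open>q < m d\<close>] pq by simp
      define c where "c = frac (Lf d \<alpha> m')"
      have cA: "c \<in> A" unfolding c_def using inA[OF Rm'] .
      have "c \<noteq> a"
      proof
        assume "c = a"
        from F[OF this[unfolded c_def]] have "\<forall>i\<in>{1..d}. m i = n i + w i" unfolding m'_def by auto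
        with Rw[OF m(1)] show False by simp
      qed
      then have le: "frac (b - a) \<le> frac (c - a)" using b(2) cA unfolding B_def by blast
      have Lm': "Lf d \<alpha> m' = Lf d \<alpha> m - \<eta>" unfolding m'_def by (simp add: Lf_diff eta w_def)
      define y where "y = frac (Lf d \<alpha> m - Lf d \<alpha> n)"
      have ybig: "y > \<eta>"
      proof -
        have ub: "\<forall>i\<in>{1..d}. \<bar>of_int (m i - n i)\<bar> < r" by (rule Rg_diff_bound[OF m(1) Rn])
        have u0: "\<not> (\<forall>i\<in>{1..d}. m i - n i = 0)"
        proof
          assume "\<forall>i\<in>{1..d}. m i - n i = 0"
          then have "Lf d \<alpha> m = Lf d \<alpha> n" by (intro Lf_cong) auto
          then show False using bA m(2) unfolding a_def by simp
        qed
        have uw: "\<not> (\<forall>i\<in>{1..d}. m i - n i = \<sigma> * w i)"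
          using Rw[OF m(1)] sig by (force simp: algebra_simps)
        have "frac (Lf d \<alpha> (\<lambda>i. m i - n i)) > \<bar>\<eta>\<bar>" by (rule gapbig[OF ub u0 uw])
        then show ?thesis unfolding y_def Lf_diff using True by simp
      qed
      have "frac (c - a) = frac (Lf d \<alpha> m' - Lf d \<alpha> n)" unfolding c_def a_def by (rule frac_sub)
      also have "\<dots> = frac ((Lf d \<alpha> m - Lf d \<alpha> n) - \<eta>)" unfolding Lm' by (simp add: algebra_simps)
      also have "\<dots> = frac (y - \<eta>)" unfolding y_def by (rule frac_shift)
      also have "\<dots> = y - \<eta>" using ybig True frac_lt_1[of "Lf d \<alpha> m - Lf d \<alpha> n"] unfolding y_def
        by (intro frac_eq_id) auto
      finally have "frac (c - a) = y - \<eta>" .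
      with le gapeq True show False unfolding y_def by simp
    qed
    then show ?thesis using m(1) gap gapeq True unfolding A_def n_def by auto
  next
    case False
    then have neg: "\<eta> < 0" using ne by simp
    have sig: "\<sigma> = -1" unfolding \<sigma>_def using False by simp
    obtain b where b: "b \<in> B" "\<And>c. c \<in> B \<Longrightarrow> frac (a - b) \<le> frac (a - c)"
      using exists_min_on[OF finB neB, of "\<lambda>c. frac (a - c)"] by blast
    have bA: "b \<in> A" "b \<noteq> a" using b(1) unfolding B_def by auto
    then obtain m where m: "Rg d r m" "b = frac (Lf d \<alpha> m)" unfolding A_def Aset_eq by auto
    have gap: "frac (a - b) \<in> cyc_gaps A"
      using gap_pred[OF finA subA bA(1) aA] bA(2) b(2) unfolding B_def by blast
    have gapeq: "frac (a - b) = frac (Lf d \<alpha> n - Lf d \<alpha> m)" unfolding m(2) a_def by (rule frac_sub)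
    have "m d \<le> q"
    proof (rule ccontr)
      assume "\<not> m d \<le> q"
      then have "q < m d" by simp
      define m' where "m' = (\<lambda>j. m j - w j)"
      have Rm': "Rg d r m'" unfolding m'_def w_def using Rg_shift[OF d2 pq(2) _ m(1) \<open>q < m d\<close>] pq by simp
      define c where "c = frac (Lf d \<alpha> m')"
      have cA: "c \<in> A" unfolding c_def using inA[OF Rm'] .
      have "c \<noteq> a"
      proof
        assume "c = a"
        from F[OF this[unfolded c_def]] have "\<forall>i\<in>{1..d}. m i = n i + w i" unfolding m'_def by auto
        with Rw[OF m(1)] show False by simp
      qed
      then have le: "frac (a - b) \<le> frac (a - c)" using b(2) cA unfolding B_def by blast
      have Lm': "Lf d \<alpha> m' = Lf d \<alpha> m - \<eta>" unfolding m'_def by (simp add: Lf_diff eta w_def)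
      define y where "y = frac (Lf d \<alpha> n - Lf d \<alpha> m)"
      have ybig: "y > \<bar>\<eta>\<bar>"
      proof -
        have ub: "\<forall>i\<in>{1..d}. \<bar>of_int (n i - m i)\<bar> < r" by (rule Rg_diff_bound[OF Rn m(1)])
        have u0: "\<not> (\<forall>i\<in>{1..d}. n i - m i = 0)"
        proof
          assume "\<forall>i\<in>{1..d}. n i - m i = 0"
          then have "Lf d \<alpha> m = Lf d \<alpha> n" by (intro Lf_cong) auto
          then show False using bA m(2) unfolding a_def by simp
        qed
        have uw: "\<not> (\<forall>i\<in>{1..d}. n i - m i = \<sigma> * w i)"
          using Rw[OF m(1)] sig by (force simp: algebra_simps)
        have "frac (Lf d \<alpha> (\<lambda>i. n i - m i)) > \<bar>\<eta>\<bar>" by (rule gapbig[OF ub u0 uw])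
        then show ?thesis unfolding y_def Lf_diff by simp
      qed
      have "frac (a - c) = frac (Lf d \<alpha> n - Lf d \<alpha> m')" unfolding c_def a_def by (rule frac_sub)
      also have "\<dots> = frac ((Lf d \<alpha> n - Lf d \<alpha> m) - \<bar>\<eta>\<bar>)" unfolding Lm' using neg by (simp add: algebra_simps)
      also have "\<dots> = frac (y - \<bar>\<eta>\<bar>)" unfolding y_def by (rule frac_shift)
      also have "\<dots> = y - \<bar>\<eta>\<bar>" using ybig frac_lt_1[of "Lf d \<alpha> n - Lf d \<alpha> m"] unfolding y_def
        by (intro frac_eq_id) auto
      finally have "frac (a - c) = y - \<bar>\<eta>\<bar>" .
      with le gapeq ne show False unfolding y_def by simp
    qed
    moreover have "frac (Lf d \<alpha> n - Lf d \<alpha> m) = frac (-1 * (Lf d \<alpha> m - Lf d \<alpha> n))" by simp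
    ultimately show ?thesis using m(1) gap gapeq False unfolding A_def n_def by auto
  qed
qed

lemma count:
  fixes d :: nat and \<alpha> :: "nat \<Rightarrow> real" and p q :: int and r \<eta> :: real
  assumes d2: "d \<ge> 2"
    and indep: "\<And>(c0::rat) (c::nat \<Rightarrow> rat).
           of_rat c0 + (\<Sum>j=1..d. of_rat (c j) * \<alpha> j) = 0 \<Longrightarrow> c0 = 0 \<and> (\<forall>j\<in>{1..d}. c j = 0)"
    and pq: "1 \<le> p" "2 * p \<le> q"
    and eta: "\<eta> = Lf d \<alpha> (wv d p q)" and ne: "\<eta> \<noteq> 0"
    and sep: "\<forall>u. (\<forall>i\<in>{1..d}. \<bar>of_int (u i)\<bar> < r) \<longrightarrow>
                 (\<exists>j::int. \<forall>i\<in>{1..d}. u i = j * wv d p q i) \<or> dnint (Lf d \<alpha> u) > \<bar>\<eta>\<bar>"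
    and small: "(r + 1) * \<bar>\<eta>\<bar> < 1"
    and rq: "of_int q + 4 \<le> r"
  shows "(r - 3) / of_int q \<le> real (card (cyc_gaps (Aset d \<alpha> r)))"
proof -
  define s :: real where "s = (if \<eta> > 0 then 1 else -1)"
  define nt where "nt = (\<lambda>t::int. \<lambda>j::nat. if j = d then t else (1::int))"
  define J where "J = nat (floor ((r - 3) / of_int q)) + 1"
  define tt where "tt = (\<lambda>k::nat. 1 + int k * q)"
  have q0: "(0::real) < of_int q" using pq by simp
  have dd: "d \<in> {1..d}" using d2 by simp
  have tk: "1 \<le> tt k" "of_int (tt k) + 2 \<le> r" if "k < J" for k
  proof -
    show "1 \<le> tt k" unfolding tt_def using pq by simp
    have "k \<le> nat (floor ((r - 3) / of_int q))" using that unfolding J_def by simp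
    moreover have "(r - 3) / of_int q \<ge> 0" using rq q0 by simp
    ultimately have "int k \<le> floor ((r - 3) / of_int q)" by linarith
    then have "real k \<le> (r - 3) / of_int q" by linarith
    then have "real k * of_int q \<le> r - 3" using q0 by (simp add: le_divide_eq)
    then show "of_int (tt k) + 2 \<le> r" unfolding tt_def by simp
  qed
  have P: "\<exists>m. Rg d r m \<and> m d \<le> q \<and>
      frac (s * (Lf d \<alpha> m - Lf d \<alpha> (nt (tt k)))) \<in> cyc_gaps (Aset d \<alpha> r)" if "k < J" for k
  proof -
    define t' :: int where "t' = (if tt k = 1 then 2 else 1)"
    have R': "Rg d r (nt t')" unfolding nt_def using Rg_nt[OF d2, of t' r] rq q0 unfolding t'_def by auto
    have "nt t' d \<noteq> tt k" unfolding nt_def t'_def by simp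
    from claim[OF d2 indep pq eta ne sep small tk[OF that] R' this] show ?thesis
      unfolding s_def nt_def by simp
  qed
  then obtain M where M: "\<And>k. k \<in> {..<J} \<Longrightarrow> Rg d r (M k) \<and> M k d \<le> q \<and>
      frac (s * (Lf d \<alpha> (M k) - Lf d \<alpha> (nt (tt k)))) \<in> cyc_gaps (Aset d \<alpha> r)"
  proof -
    have "\<forall>k\<in>{..<J}. \<exists>m. Rg d r m \<and> m d \<le> q \<and>
      frac (s * (Lf d \<alpha> m - Lf d \<alpha> (nt (tt k)))) \<in> cyc_gaps (Aset d \<alpha> r)" using P by blast
    from bchoice[OF this] obtain M where "\<forall>k\<in>{..<J}. Rg d r (M k) \<and> M k d \<le> q \<and>
      frac (s * (Lf d \<alpha> (M k) - Lf d \<alpha> (nt (tt k)))) \<in> cyc_gaps (Aset d \<alpha> r)" by blast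
    with that show ?thesis by blast
  qed
  define g where "g = (\<lambda>k. frac (s * (Lf d \<alpha> (M k) - Lf d \<alpha> (nt (tt k)))))"
  have sub: "g ` {..<J} \<subseteq> cyc_gaps (Aset d \<alpha> r)" unfolding g_def using M by auto
  have inj: "inj_on g {..<J}"
  proof (rule inj_onI)
    fix k1 k2 assume k: "k1 \<in> {..<J}" "k2 \<in> {..<J}" and eq: "g k1 = g k2"
    define x where "x = (\<lambda>j. (M k1 j - nt (tt k1) j) - (M k2 j - nt (tt k2) j))"
    have "s * (Lf d \<alpha> (M k1) - Lf d \<alpha> (nt (tt k1))) - s * (Lf d \<alpha> (M k2) - Lf d \<alpha> (nt (tt k2))) \<in> \<int>"
      using eq unfolding g_def by (rule frac_eq_Ints)
    then have "s * Lf d \<alpha> x \<in> \<int>" unfolding x_def Lf_diff by (simp add: algebra_simps)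
    then have "s * (s * Lf d \<alpha> x) \<in> \<int>" unfolding s_def by auto
    then have "Lf d \<alpha> x \<in> \<int>" unfolding s_def by (auto split: if_splits)
    from indep_int[OF indep this] dd have "x d = 0" by blast
    then have e: "M k1 d - M k2 d = tt k1 - tt k2" unfolding x_def nt_def by simp
    have b1: "0 < M k1 d" "M k1 d \<le> q" "0 < M k2 d" "M k2 d \<le> q"
      using M[OF k(1)] M[OF k(2)] dd unfolding Rg_def by auto
    have "\<bar>(int k1 - int k2) * q\<bar> < q" using e b1 unfolding tt_def by (simp add: algebra_simps)
    then have "\<bar>int k1 - int k2\<bar> * q < 1 * q" using pq by (simp add: abs_mult)
    then have "\<bar>int k1 - int k2\<bar> < 1"
    proof (rule contrapos_pp)
      assume "\<not> \<bar>int k1 - int k2\<bar> < 1"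
      then have "1 * q \<le> \<bar>int k1 - int k2\<bar> * q" using pq by (intro mult_right_mono) auto
      then show "\<not> \<bar>int k1 - int k2\<bar> * q < 1 * q" by simp
    qed
    then show "k1 = k2" by simp
  qed
  have "card (g ` {..<J}) = J" using inj by (simp add: card_image)
  moreover have "card (g ` {..<J}) \<le> card (cyc_gaps (Aset d \<alpha> r))"
    using sub finite_cyc_gaps[OF finite_Aset] by (rule card_mono[rotated])
  moreover have "(r - 3) / of_int q \<le> real J"
  proof -
    have "(r - 3) / of_int q \<ge> 0" using rq q0 by simp
    then have "real (nat (floor ((r - 3) / of_int q))) = of_int (floor ((r - 3) / of_int q))" by simp
    then show ?thesis unfolding J_def by linarith
  qed
  ultimately show ?thesis by linarith
qed

lemma pow_ident:
  fixes Q \<epsilon> :: real and d :: nat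
  assumes "Q > 0" "d \<ge> 2"
  shows "Q ^ (d - 1) * Q ^ d * Q powr \<epsilon> * Q powr (- (2 * real d - 1 + \<epsilon>)) = 1"
proof -
  have "Q ^ (d - 1) * Q ^ d * Q powr \<epsilon> * Q powr (- (2 * real d - 1 + \<epsilon>))
     = Q powr real (d - 1) * Q powr real d * Q powr \<epsilon> * Q powr (- (2 * real d - 1 + \<epsilon>))"
    using assms by (simp only: powr_realpow)
  also have "\<dots> = Q powr (real (d - 1) + real d + \<epsilon> + (- (2 * real d - 1 + \<epsilon>)))"
    by (simp only: powr_add)
  also have "real (d - 1) + real d + \<epsilon> + (- (2 * real d - 1 + \<epsilon>)) = 0"
    using assms by (simp add: of_nat_diff)
  finally show ?thesis using assms by simp
qed

lemma powr_pow_d: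
  fixes Q c :: real and d :: nat
  assumes "Q > 0" "d \<ge> 1"
  shows "(Q powr (c / real d)) ^ d = Q powr c"
  using assms by (simp add: powr_power)

lemma infinite_int_big:
  fixes S :: "int set" and B :: real
  assumes "infinite S"
  shows "\<exists>n\<in>S. of_int \<bar>n\<bar> > B"
proof (rule ccontr)
  assume H: "\<not> ?thesis"
  then have "S \<subseteq> {- ceiling B..ceiling B}"
  proof (intro subsetI)
    fix n assume "n \<in> S"
    with H have "of_int \<bar>n\<bar> \<le> B" by auto
    then have "\<bar>n\<bar> \<le> ceiling B" using le_of_int_ceiling[of B] by linarith
    then show "n \<in> {- ceiling B..ceiling B}" by auto
  qed
  then have "finite S" by (rule finite_subset) simp
  with assms show False by simp
qed

theorem lemma6p1:
  fixes d :: nat and \<epsilon> :: real and \<alpha> :: "nat \<Rightarrow> real"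
  assumes "d \<ge> 2" and "\<epsilon> > 0"
    and "\<alpha> \<in> Bad_lin (d - 1)"
    and "\<alpha> d / \<alpha> 1 \<in> Eset (\<lambda>q. real q powr (- (2 * real d - 1 + \<epsilon>))) \<inter> {0<..<1/2}"
    and "\<And>(c0::rat) (c::nat \<Rightarrow> rat).
           of_rat c0 + (\<Sum>j=1..d. of_rat (c j) * \<alpha> j) = 0 \<Longrightarrow> c0 = 0 \<and> (\<forall>j\<in>{1..d}. c j = 0)"
  shows "\<exists>C>0. \<forall>R. \<exists>r>R. r > 0 \<and>
           real (card (cyc_gaps (Aset d \<alpha> r))) > C * r powr (\<epsilon> / (real d + \<epsilon>))"
proof -
  have d2: "d \<ge> 2" using assms(1) .
  have eps: "\<epsilon> > 0" using assms(2) .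
  note indep = assms(5)
  obtain CB where CB: "CB > 0" and bad: "\<forall>n::nat\<Rightarrow>int. (\<exists>j\<in>{1..d-1}. n j \<noteq> 0) \<longrightarrow>
       dnint (\<Sum>j=1..d-1. \<alpha> j * of_int (n j)) \<ge> CB / (of_int (supnorm (d-1) n)) ^ (d-1)"
    using assms(3) unfolding Bad_lin_def by blast
  define \<beta> where "\<beta> = \<alpha> d / \<alpha> 1"
  have \<beta>: "0 < \<beta>" "\<beta> < 1/2" using assms(4) unfolding \<beta>_def by auto
  define E where "E = 2 * real d - 1 + \<epsilon>"
  have E3: "E \<ge> 3" unfolding E_def using d2 eps by simp
  define S where "S = {n::int. dnint (of_int n * \<beta>) \<le> real (nat \<bar>n\<bar>) powr (- E)}"
  have Sinf: "infinite S" using assms(4) unfolding S_def \<beta>_def E_def Eset_def by auto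
  have a10: "\<alpha> 1 \<noteq> 0" using \<beta> unfolding \<beta>_def by auto
  have \<alpha>d: "\<alpha> d = \<alpha> 1 * \<beta>" unfolding \<beta>_def using a10 by simp
  define a1 where "a1 = \<bar>\<alpha> 1\<bar>"
  have a1: "a1 > 0" unfolding a1_def using a10 by simp
  have CBh: "CB \<le> 1/2"
  proof -
    have ex1: "\<exists>j\<in>{1..d-1}. (\<lambda>_. 1::int) j \<noteq> 0" using d2 by auto
    have h: "dnint (\<Sum>j=1..d-1. \<alpha> j * of_int ((\<lambda>_. 1::int) j)) \<ge> CB / (of_int (supnorm (d-1) (\<lambda>_. 1::int))) ^ (d-1)"
      using mp[OF spec[OF bad, of "\<lambda>_. 1::int"] ex1] by simp
    have "(\<lambda>j. \<bar>(\<lambda>_. 1::int) j\<bar>) ` {1..d-1} = {1}" using d2 by (simp add: image_constant_conv)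
    then have "supnorm (d-1) (\<lambda>_. 1::int) = 1" unfolding supnorm_def by simp
    with h have "CB \<le> dnint (\<Sum>j=1..d-1. \<alpha> j * of_int ((\<lambda>_. 1::int) j))" by simp
    with dnint_half show ?thesis by (meson order_trans)
  qed
  define c where "c = CB / (2^(d+1) * a1)"
  have c0: "c > 0" unfolding c_def using CB a1 by simp
  define \<kappa> where "\<kappa> = c powr (1 / real d)"
  have \<kappa>0: "\<kappa> > 0" unfolding \<kappa>_def using c0 by simp
  have \<kappa>d: "\<kappa> ^ d = c" unfolding \<kappa>_def using c0 d2 by (simp add: powr_power)
  define C where "C = \<kappa> powr (real d / (real d + \<epsilon>)) / 2"
  have C0: "C > 0" unfolding C_def using \<kappa>0 by simp
  show ?thesis
  proof (rule exI[of _ C], intro conjI allI C0)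
    fix R
    define B where "B = max (max (1/\<beta>) 4) (max R ((2/\<kappa>) powr (real d / \<epsilon>)))"
    obtain n where n: "n \<in> S" "of_int \<bar>n\<bar> > B" using infinite_int_big[OF Sinf] by blast
    define q0 where "q0 = \<bar>n\<bar>"
    define Q where "Q = real_of_int q0"
    have Qb: "Q > 1/\<beta>" "Q > 4" "Q > R" "Q > (2/\<kappa>) powr (real d / \<epsilon>)"
      using n(2) unfolding Q_def q0_def B_def by auto
    have Q0: "Q > 0" using Qb by simp
    have q0pos: "q0 \<ge> 1" using Qb unfolding Q_def by simp
    have dn: "dnint (Q * \<beta>) \<le> Q powr (- E)"
    proof -
      have h: "dnint (of_int n * \<beta>) \<le> Q powr (- E)" using n(1) unfolding S_def Q_def q0_def by simp
      show ?thesis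
      proof (cases "n \<ge> 0")
        case True then show ?thesis using h unfolding Q_def q0_def by simp
      next
        case False
        then have "Q * \<beta> = - (of_int n * \<beta>)" unfolding Q_def q0_def by simp
        then show ?thesis using h dnint_minus by simp
      qed
    qed
    define p0 where "p0 = round (Q * \<beta>)"
    define e0 where "e0 = Q * \<beta> - of_int p0"
    have e0b: "\<bar>e0\<bar> \<le> Q powr (- E)" using dn unfolding e0_def p0_def dnint_def by simp
    have QE: "Q powr (- E) \<le> 1 / 4"
    proof -
      have "Q powr (- E) \<le> Q powr (-1)" using E3 Qb by (intro powr_mono) auto
      also have "\<dots> = 1 / Q" using Q0 by (simp add: powr_minus_divide)
      also have "\<dots> \<le> 1/4" using Qb by (simp add: divide_simps)
      finally show ?thesis .
    qed
    have p0pos: "1 \<le> p0"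
    proof (rule ccontr)
      assume "\<not> 1 \<le> p0"
      then have "of_int p0 \<le> (0::real)" by simp
      moreover have "Q * \<beta> > 1" using Qb \<beta> by (simp add: divide_less_eq mult.commute)
      ultimately have "e0 > 1" unfolding e0_def by simp
      with e0b QE show False by simp
    qed
    have p0q: "2 * p0 \<le> q0"
    proof -
      have "of_int p0 = Q * \<beta> - e0" unfolding e0_def by simp
      moreover have "Q * \<beta> < Q * (1/2)" using \<beta> Q0 by (intro mult_strict_left_mono) auto
      moreover have "- e0 \<le> 1/4" using e0b QE by linarith
      ultimately have "2 * of_int p0 < Q + 1" by linarith
      then have "2 * p0 < q0 + 1" unfolding Q_def by linarith
      then show ?thesis by simp
    qed
    define g where "g = gcd p0 q0"
    define p where "p = p0 div g"
    define q where "q = q0 div g"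
    have g1: "g \<ge> 1" unfolding g_def using p0pos by (simp add: gcd_pos_int[THEN iffD2] int_one_le_iff_zero_less)
    have pg: "p0 = p * g" unfolding p_def g_def by simp
    have qg: "q0 = q * g" unfolding q_def g_def by simp
    have cop: "coprime p q" unfolding p_def q_def g_def using p0pos by (intro div_gcd_coprime) auto
    have p1: "1 \<le> p"
    proof (rule ccontr)
      assume "\<not> 1 \<le> p"
      then have "p \<le> 0" by simp
      then have "p * g \<le> 0" using g1 by (simp add: mult_nonpos_nonneg)
      then show False using pg p0pos by simp
    qed
    have pq2: "2 * p \<le> q"
    proof -
      have "(2 * p) * g \<le> q * g" using p0q pg qg by (simp add: algebra_simps)
      then show ?thesis using g1 by simp
    qed
    have q1: "1 \<le> q" using p1 pq2 by simp
    have qQ: "of_int q \<le> Q"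
    proof -
      have "q * 1 \<le> q * g" using g1 q1 by (intro mult_left_mono) auto
      then have "q \<le> q0" unfolding qg by simp
      then show ?thesis unfolding Q_def by simp
    qed
    define \<eta> where "\<eta> = Lf d \<alpha> (wv d p q)"
    have \<eta>e: "\<eta> = of_int q * \<alpha> d - of_int p * \<alpha> 1" unfolding \<eta>_def using Lf_wv[OF d2] .
    have \<eta>g: "\<eta> * of_int g = \<alpha> 1 * e0"
    proof -
      have "\<eta> * of_int g = of_int q0 * \<alpha> d - of_int p0 * \<alpha> 1" unfolding \<eta>e pg qg by (simp add: algebra_simps)
      also have "\<dots> = \<alpha> 1 * e0" unfolding e0_def Q_def \<alpha>d by (simp add: algebra_simps)
      finally show ?thesis .
    qed
    have \<eta>b: "\<bar>\<eta>\<bar> \<le> a1 * Q powr (- E)"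
    proof -
      have "\<bar>\<eta>\<bar> * 1 \<le> \<bar>\<eta>\<bar> * of_int g" using g1 by (intro mult_left_mono) auto
      also have "\<dots> = a1 * \<bar>e0\<bar>"
      proof -
        have "\<bar>\<eta> * of_int g\<bar> = \<bar>\<alpha> 1 * e0\<bar>" by (simp only: \<eta>g)
        then show ?thesis using g1 unfolding a1_def by (simp add: abs_mult)
      qed
      also have "\<dots> \<le> a1 * Q powr (- E)" using e0b a1 by (intro mult_left_mono) auto
      finally show ?thesis by simp
    qed
    have \<eta>0: "\<eta> \<noteq> 0"
    proof
      assume "\<eta> = 0"
      then have "Lf d \<alpha> (wv d p q) \<in> \<int>" unfolding \<eta>_def by simp
      from indep_int[OF indep this] d2 have "wv d p q d = 0" by auto
      then show False using q1 d2 unfolding wv_def by auto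
    qed
    define x where "x = Q powr (\<epsilon> / real d)"
    define r where "r = \<kappa> * Q * x"
    have x1: "x \<ge> 1" unfolding x_def using Qb eps by (intro ge_one_powr_ge_zero) auto
    have x2: "\<kappa> * x \<ge> 2"
    proof -
      have "((2/\<kappa>) powr (real d / \<epsilon>)) powr (\<epsilon> / real d) \<le> Q powr (\<epsilon> / real d)"
        using Qb eps by (intro powr_mono2) auto
      moreover have "((2/\<kappa>) powr (real d / \<epsilon>)) powr (\<epsilon> / real d) = 2 / \<kappa>"
        using eps d2 \<kappa>0 by (simp add: powr_powr)
      ultimately have "2 / \<kappa> \<le> x" unfolding x_def by simp
      then show ?thesis using \<kappa>0 by (simp add: divide_le_eq mult.commute)
    qed
    have r2Q: "r \<ge> 2 * Q"
    proof -
      have "\<kappa> * x * Q \<ge> 2 * Q" using x2 Q0 by (intro mult_right_mono) auto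
      then show ?thesis unfolding r_def by (simp add: mult_ac)
    qed
    have rpos: "r > 0" using r2Q Q0 by simp
    have rd: "r ^ d = \<kappa> ^ d * Q ^ d * Q powr \<epsilon>"
      unfolding r_def x_def using powr_pow_d[OF Q0, of d \<epsilon>] d2 by (simp add: power_mult_distrib)
    have K: "(of_int q + r) * \<bar>\<eta>\<bar> * (2 * of_int q * r) ^ (d-1) < CB"
    proof -
      have "(of_int q + r) * \<bar>\<eta>\<bar> * (2 * of_int q * r) ^ (d-1)
          \<le> (2 * r) * (a1 * Q powr (- E)) * (2 * Q * r) ^ (d-1)"
        using qQ r2Q Q0 q1 \<eta>b by (intro mult_mono power_mono) auto
      also have "\<dots> = 2 ^ d * a1 * (Q ^ (d - 1) * r ^ d * Q powr (- E))"
      proof -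
        have "d = Suc (d - 1)" using d2 by simp
        then have "(2::real) ^ d = 2 * 2 ^ (d-1)" "r ^ d = r * r ^ (d-1)" by (metis power_Suc)+
        then show ?thesis by (simp add: power_mult_distrib algebra_simps)
      qed
      also have "\<dots> = 2 ^ d * a1 * \<kappa> ^ d * (Q ^ (d - 1) * Q ^ d * Q powr \<epsilon> * Q powr (- E))"
        unfolding rd by (simp add: algebra_simps)
      also have "\<dots> = 2 ^ d * a1 * \<kappa> ^ d" using pow_ident[OF Q0 d2, of \<epsilon>] unfolding E_def by simp
      also have "\<dots> = CB / 2" unfolding \<kappa>d c_def using a1 by (simp add: field_simps)
      also have "\<dots> < CB" using CB by simp
      finally show ?thesis .
    qed
    have sep: "\<forall>u. (\<forall>i\<in>{1..d}. \<bar>of_int (u i)\<bar> < r) \<longrightarrow>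
                 (\<exists>j::int. \<forall>i\<in>{1..d}. u i = j * wv d p q i) \<or> dnint (Lf d \<alpha> u) > \<bar>\<eta>\<bar>"
    proof (intro allI impI)
      fix u :: "nat \<Rightarrow> int" assume "\<forall>i\<in>{1..d}. \<bar>of_int (u i)\<bar> < r"
      from separation[OF d2 bad CB p1 _ cop \<eta>e K this] pq2 p1 show
        "(\<exists>j::int. \<forall>i\<in>{1..d}. u i = j * wv d p q i) \<or> dnint (Lf d \<alpha> u) > \<bar>\<eta>\<bar>" by simp
    qed
    have small: "(r + 1) * \<bar>\<eta>\<bar> < 1"
    proof -
      have "2 * 1 * r \<le> 2 * of_int q * r" using q1 rpos by (intro mult_right_mono) auto
      then have "1 \<le> 2 * of_int q * r" using r2Q Qb by linarith
      then have pw: "1 \<le> (2 * of_int q * r) ^ (d-1)" by (rule one_le_power)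
      have "(r + 1) * \<bar>\<eta>\<bar> \<le> (of_int q + r) * \<bar>\<eta>\<bar>" using q1 by (intro mult_right_mono) auto
      also have "\<dots> \<le> (of_int q + r) * \<bar>\<eta>\<bar> * (2 * of_int q * r) ^ (d-1)"
      proof -
        have nn: "0 \<le> (of_int q + r) * \<bar>\<eta>\<bar>" using q1 rpos by simp
        show ?thesis using mult_left_mono[OF pw nn] by simp
      qed
      also have "\<dots> < CB" by (rule K)
      finally show ?thesis using CBh by simp
    qed
    have rq: "of_int q + 4 \<le> r" using qQ r2Q Qb by simp
    have cnt: "(r - 3) / of_int q \<le> real (card (cyc_gaps (Aset d \<alpha> r)))"
      by (rule count[OF d2 indep p1 pq2 \<eta>_def \<eta>0 sep small rq])
    have "(r - 3) / Q \<le> (r - 3) / of_int q"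
      using qQ q1 rq by (intro divide_left_mono) auto
    also have "(r - 3) / Q = \<kappa> * x - 3 / Q" unfolding r_def using Q0 by (simp add: field_simps)
    finally have lo: "\<kappa> * x - 3 / Q \<le> real (card (cyc_gaps (Aset d \<alpha> r)))" using cnt by linarith
    have rp: "C * r powr (\<epsilon> / (real d + \<epsilon>)) = \<kappa> * x / 2"
    proof -
      have "Q * x = Q powr ((real d + \<epsilon>) / real d)"
        unfolding x_def using Q0 d2 by (simp add: powr_mult_base add_divide_distrib)
      then have "r = \<kappa> * Q powr ((real d + \<epsilon>) / real d)" unfolding r_def by simp
      then have "r powr (\<epsilon> / (real d + \<epsilon>)) = \<kappa> powr (\<epsilon> / (real d + \<epsilon>)) * Q powr (\<epsilon> / real d)"
        using d2 eps by (simp add: powr_mult powr_powr)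
      then have "C * r powr (\<epsilon> / (real d + \<epsilon>)) = (\<kappa> powr (real d / (real d + \<epsilon>)) * \<kappa> powr (\<epsilon> / (real d + \<epsilon>))) * x / 2"
        unfolding C_def x_def by simp
      also have "\<kappa> powr (real d / (real d + \<epsilon>)) * \<kappa> powr (\<epsilon> / (real d + \<epsilon>)) = \<kappa> powr 1"
        unfolding powr_add[symmetric] using d2 eps by (simp add: add_divide_distrib[symmetric])
      finally show ?thesis using \<kappa>0 by simp
    qed
    have "3 / Q < 1" using Qb by simp
    then have "\<kappa> * x / 2 < \<kappa> * x - 3 / Q" using x2 by simp
    with lo rp have "C * r powr (\<epsilon> / (real d + \<epsilon>)) < real (card (cyc_gaps (Aset d \<alpha> r)))" by linarith
    moreover have "r > R" using r2Q Qb Q0 by simp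
    ultimately show "\<exists>r>R. r > 0 \<and> real (card (cyc_gaps (Aset d \<alpha> r))) > C * r powr (\<epsilon> / (real d + \<epsilon>))"
      using rpos by blast
  qed
qed

end
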